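(* Let $N=2m+1$ be an odd integer with $N\ge3$. There exist $\varphi,\psi\in\mathbb{C}^N$ such that there is no $c\in\mathbb{C}$ with $|c|=1$ and $\psi=c\varphi$, while for all $k=0,\ldots,2N-3$, $$\Big|P_\varphi\Big(\tfrac{k}{2N-2}\Big)\Big|=\Big|P_\psi\Big(\tfrac{k}{2N-2}\Big)\Big|\quad\text{and}\quad\Big|P_\varphi'\Big(\tfrac{k}{2N-2}\Big)\Big|=\Big|P_\psi'\Big(\tfrac{k}{2N-2}\Big)\Big|.$$
   Context: For $\psi=(\psi_0,\ldots,\psi_{N-1})\in\mathbb{C}^N$, $P_\psi(x)=\sum_{j=0}^{N-1}\psi_je^{2i\pi jx}$ for $x\in\mathbb{R}$, and $P_\psi'$ denotes its derivative in $x$. *)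

theory Defs
  imports "HOL-Analysis.Analysis"
begin

text \<open>A vector psi in C^N is represented as a function nat => complex, of which
only the entries psi 0, ..., psi (N-1) are relevant.
P_psi(x) = sum_{j<N} psi_j exp(2 i pi j x).\<close>

definition trigP :: "nat \<Rightarrow> (nat \<Rightarrow> complex) \<Rightarrow> real \<Rightarrow> complex" where
  "trigP N \<psi> x = (\<Sum>j<N. \<psi> j * exp (2 * \<i> * of_real pi * of_nat j * of_real x))"

end

theory Submission
  imports Defs
begin

definition vv :: "nat \<Rightarrow> complex \<Rightarrow> nat \<Rightarrow> complex" where
  "vv M a j = (if j = 0 then 1 else if j = M then a else 0)"

lemma trig_vv:
  assumes "0 < M" "M < N"
  shows "trigP N (vv M a) = (\<lambda>x. 1 + a * exp (2 * \<i> * of_real pi * of_nat M * of_real x))"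
proof
  fix x
  have "trigP N (vv M a) x = (\<Sum>j<N. (if j = 0 then 1 else 0) + (if j = M then a * exp (2 * \<i> * of_real pi * of_nat M * of_real x) else 0))"
    unfolding trigP_def vv_def using assms by (intro sum.cong) auto
  also have "\<dots> = 1 + a * exp (2 * \<i> * of_real pi * of_nat M * of_real x)"
    using assms by (simp add: sum.distrib)
  finally show "trigP N (vv M a) x = 1 + a * exp (2 * \<i> * of_real pi * of_nat M * of_real x)" .
qed

lemma deriv_vv:
  "norm (vector_derivative (\<lambda>x. 1 + a * exp (2 * \<i> * of_real pi * of_nat M * of_real x)) (at (t::real)))
   = cmod a * (2 * pi * M)"
proof -
  let ?c = "2 * \<i> * of_real pi * of_nat M :: complex"
  have "((\<lambda>x. 1 + a * exp (?c * of_real x)) has_vector_derivative (a * (exp (?c * of_real t) * ?c))) (at t)"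
    by (rule has_vector_derivative_real_field derivative_eq_intros refl)+ simp_all
  hence "vector_derivative (\<lambda>x. 1 + a * exp (?c * of_real x)) (at t) = a * (exp (?c * of_real t) * ?c)"
    by (rule vector_derivative_at)
  moreover have "cmod (exp (?c * of_real t)) = 1"
    by (simp add: norm_exp_eq_Re)
  moreover have "cmod ?c = 2 * pi * M" by (simp add: norm_mult)
  ultimately show ?thesis by (simp add: norm_mult)
qed

theorem mainTheorem11:
  fixes N m :: nat
  assumes "N = 2 * m + 1" and "N \<ge> 3"
  shows "\<exists>\<phi> \<psi> :: nat \<Rightarrow> complex.
           \<not> (\<exists>c :: complex. cmod c = 1 \<and> (\<forall>j<N. \<psi> j = c * \<phi> j)) \<and>
           (\<forall>k::nat. k \<le> 2 * N - 3 \<longrightarrow>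
              cmod (trigP N \<phi> (real k / real (2 * N - 2))) = cmod (trigP N \<psi> (real k / real (2 * N - 2))) \<and>
              norm (vector_derivative (trigP N \<phi>) (at (real k / real (2 * N - 2)))) =
              norm (vector_derivative (trigP N \<psi>) (at (real k / real (2 * N - 2)))))"
proof (intro exI conjI)
  let ?M = "2 * m"
  have m: "m \<ge> 1" using assms by auto
  have M: "0 < ?M" "?M < N" using assms m by auto
  show "\<not> (\<exists>c :: complex. cmod c = 1 \<and> (\<forall>j<N. vv ?M (-\<i>) j = c * vv ?M \<i> j))"
  proof
    assume "\<exists>c :: complex. cmod c = 1 \<and> (\<forall>j<N. vv ?M (-\<i>) j = c * vv ?M \<i> j)"
    then obtain c where h: "\<forall>j<N. vv ?M (-\<i>) j = c * vv ?M \<i> j" by blast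
    from h[rule_format, of 0] have "c = 1" using assms by (simp add: vv_def)
    with h[rule_format, of ?M] M show False by (simp add: vv_def)
  qed
  show "\<forall>k::nat. k \<le> 2 * N - 3 \<longrightarrow>
              cmod (trigP N (vv ?M \<i>) (real k / real (2 * N - 2))) = cmod (trigP N (vv ?M (-\<i>)) (real k / real (2 * N - 2))) \<and>
              norm (vector_derivative (trigP N (vv ?M \<i>)) (at (real k / real (2 * N - 2)))) =
              norm (vector_derivative (trigP N (vv ?M (-\<i>))) (at (real k / real (2 * N - 2))))"
  proof (intro allI impI conjI)
    fix k :: nat
    have e: "2 * \<i> * of_real pi * of_nat ?M * of_real (real k / real (2 * N - 2)) = of_nat k * (\<i> * of_real pi)"
      using assms m by (simp add: field_simps)
    have ex: "exp (2 * \<i> * of_real pi * of_nat ?M * of_real (real k / real (2 * N - 2))) = (-1) ^ k"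
      unfolding e exp_of_nat_mult by simp
    show "cmod (trigP N (vv ?M \<i>) (real k / real (2 * N - 2))) = cmod (trigP N (vv ?M (-\<i>)) (real k / real (2 * N - 2)))"
      unfolding trig_vv[OF M] ex
      by (cases "even k") (simp_all add: cmod_def)
    show "norm (vector_derivative (trigP N (vv ?M \<i>)) (at (real k / real (2 * N - 2)))) =
              norm (vector_derivative (trigP N (vv ?M (-\<i>))) (at (real k / real (2 * N - 2))))"
      unfolding trig_vv[OF M] deriv_vv by simp
  qed
qed

end
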